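(* Let $b\in B$, $i\in I$, $m=\varphi_i(b)$, $j\ge0$, $\mu\in P$, and put $n=\langle h_i,\mu\rangle+m$. Assume $n\ge0$. Then $\tilde f_i^{\,n}$ restricts to a bijection $$\tilde f_i^{\,n}:\ \bigsqcup_{t=0}^m\mathcal P_j(\tilde f_i^tb,\mu+t\alpha_i)\ \longrightarrow\ \bigsqcup_{t=0}^m\mathcal P_j\bigl(\tilde f_i^tb,\ r_i(\mu+(m-t)\alpha_i)\bigr),$$ where $\tilde f_i$ acts on $B^{\otimes(j+1)}$ by the tensor product rule.
   Context: $\mathfrak g$ is an affine Kac–Moody algebra with index set $I$ ($0$ the special node), Cartan matrix $(a_{ij})$, simple coroots $h_i$, fundamental weights $\Lambda_i$, null root $\delta$. $P=\bigoplus_{i\in I}\mathbb Z\Lambda_i\oplus\mathbb Z\delta$, $P_{cl}=\bigoplus_{i\in I}\mathbb Z\Lambda_i$, $cl:P\to P_{cl}$ the projection killing $\delta$; simple roots $\alpha_i=\sum_ja_{ji}\Lambda_j+\delta_{i0}\delta\in P$; $r_i(\mu)=\mu-\langle h_i,\mu\rangle\alpha_i$. $B$ is a finite crystal with $wt:B\to P_{cl}$, Kashiwara operators $\tilde e_i,\tilde f_i$, $\varepsilon_i(b)=\max\{k:\tilde e_i^kb\ne0\}$, $\varphi_i(b)=\max\{k:\tilde f_i^kb\ne0\}$, $\varphi_i(b)-\varepsilon_i(b)=\langle h_i,wt\,b\rangle$, $wt(\tilde f_ib)=wt(b)-cl(\alpha_i)$. Tensor products: $wt$ is additive; $\tilde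 e_i(b_1\otimes b_2)=\tilde e_ib_1\otimes b_2$ if $\varphi_i(b_1)\ge\varepsilon_i(b_2)$ and $=b_1\otimes\tilde e_ib_2$ otherwise; $\tilde f_i(b_1\otimes b_2)=\tilde f_ib_1\otimes b_2$ if $\varphi_i(b_1)>\varepsilon_i(b_2)$ and $=b_1\otimes\tilde f_ib_2$ otherwise. For $j\ge0$, $b\in B$, $\mu\in P$: $\mathcal P_j(b,\mu)=\{b\otimes b_j\otimes\cdots\otimes b_1\in B^{\otimes(j+1)}:wt(b_j)+\cdots+wt(b_1)=cl(\mu)\}$. *)

theory Defs
  imports Main
begin

text \<open>A generalized Cartan matrix is a function A :: 'i => 'i => int on a finite index
type, A i j = a_ij.  Affine type (Kac, Thm 4.3): indecomposable GCM admitting a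
vector u > 0 with A u = 0.\<close>

definition gcm :: "('i \<Rightarrow> 'i \<Rightarrow> int) \<Rightarrow> bool" where
  "gcm A \<longleftrightarrow> (\<forall>i. A i i = 2) \<and> (\<forall>i j. i \<noteq> j \<longrightarrow> A i j \<le> 0)
     \<and> (\<forall>i j. A i j = 0 \<longleftrightarrow> A j i = 0)"

definition indecomposable :: "('i \<Rightarrow> 'i \<Rightarrow> int) \<Rightarrow> bool" where
  "indecomposable A \<longleftrightarrow> \<not> (\<exists>J. J \<noteq> {} \<and> J \<noteq> UNIV \<and> (\<forall>j\<in>J. \<forall>k. k \<notin> J \<longrightarrow> A j k = 0))"

definition affine_gcm :: "('i::finite \<Rightarrow> 'i \<Rightarrow> int) \<Rightarrow> bool" where
  "affine_gcm A \<longleftrightarrow> gcm A \<and> indecomposable A \<and>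
     (\<exists>u :: 'i \<Rightarrow> int. (\<forall>j. u j > 0) \<and> (\<forall>i. (\<Sum>j\<in>UNIV. A i j * u j) = 0))"

text \<open>Weight lattice P = (sum of Z Lambda_i) + Z delta, represented as a pair
(coefficients of the Lambda_i, coefficient of delta).  P_cl = 'i => int.\<close>

type_synonym 'i wP = "('i \<Rightarrow> int) \<times> int"
type_synonym 'i wPcl = "'i \<Rightarrow> int"

definition wadd :: "'i wP \<Rightarrow> 'i wP \<Rightarrow> 'i wP" where
  "wadd x y = ((\<lambda>k. fst x k + fst y k), snd x + snd y)"

definition wscale :: "int \<Rightarrow> 'i wP \<Rightarrow> 'i wP" where
  "wscale c x = ((\<lambda>k. c * fst x k), c * snd x)"

definition cl :: "'i wP \<Rightarrow> 'i wPcl" where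
  "cl x = fst x"

text \<open><h_i, mu>: h_i pairs with Lambda_j to delta_ij and with delta to 0.\<close>
definition pairing :: "'i \<Rightarrow> 'i wP \<Rightarrow> int" where
  "pairing i x = fst x i"

text \<open>alpha_i = sum_j a_ji Lambda_j + delta_{i,0} delta, with 0 the special node i0.\<close>
definition alpha :: "('i \<Rightarrow> 'i \<Rightarrow> int) \<Rightarrow> 'i \<Rightarrow> 'i \<Rightarrow> 'i wP" where
  "alpha A i0 i = ((\<lambda>j. A j i), (if i = i0 then 1 else 0))"

definition rrefl :: "('i \<Rightarrow> 'i \<Rightarrow> int) \<Rightarrow> 'i \<Rightarrow> 'i \<Rightarrow> 'i wP \<Rightarrow> 'i wP" where
  "rrefl A i0 i x = wadd x (wscale (- pairing i x) (alpha A i0 i))"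

text \<open>A crystal structure on elements of type 'a: weight map, and Kashiwara
operators where None plays the role of 0.\<close>
record ('i, 'a) crys =
  wt :: "'a \<Rightarrow> 'i \<Rightarrow> int"
  ee :: "'i \<Rightarrow> 'a \<Rightarrow> 'a option"
  ff :: "'i \<Rightarrow> 'a \<Rightarrow> 'a option"

definition eiter :: "('i, 'a) crys \<Rightarrow> 'i \<Rightarrow> nat \<Rightarrow> 'a \<Rightarrow> 'a option" where
  "eiter C i k x = ((\<lambda>ox. Option.bind ox (ee C i)) ^^ k) (Some x)"

definition fiter :: "('i, 'a) crys \<Rightarrow> 'i \<Rightarrow> nat \<Rightarrow> 'a \<Rightarrow> 'a option" where
  "fiter C i k x = ((\<lambda>ox. Option.bind ox (ff C i)) ^^ k) (Some x)"

definition eps :: "('i, 'a) crys \<Rightarrow> 'i \<Rightarrow> 'a \<Rightarrow> nat" where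
  "eps C i x = (GREATEST k. eiter C i k x \<noteq> None)"

definition phi :: "('i, 'a) crys \<Rightarrow> 'i \<Rightarrow> 'a \<Rightarrow> nat" where
  "phi C i x = (GREATEST k. fiter C i k x \<noteq> None)"

definition is_crystal :: "('i \<Rightarrow> 'i \<Rightarrow> int) \<Rightarrow> 'a set \<Rightarrow> ('i, 'a) crys \<Rightarrow> bool" where
  "is_crystal A B C \<longleftrightarrow> finite B
   \<and> (\<forall>i b b'. b \<in> B \<longrightarrow> ee C i b = Some b' \<longrightarrow> b' \<in> B)
   \<and> (\<forall>i b b'. b \<in> B \<longrightarrow> ff C i b = Some b' \<longrightarrow> b' \<in> B)
   \<and> (\<forall>i b b'. b \<in> B \<longrightarrow> b' \<in> B \<longrightarrow> (ff C i b = Some b') = (ee C i b' = Some b))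
   \<and> (\<forall>i b b'. b \<in> B \<longrightarrow> ff C i b = Some b' \<longrightarrow> wt C b' = (\<lambda>k. wt C b k - A k i))
   \<and> (\<forall>i b. b \<in> B \<longrightarrow> int (phi C i b) - int (eps C i b) = wt C b i)"

text \<open>Tensor product b1 (x) b2 with b1 from C and b2 a list (tensor of the remaining
factors) from D; the list y # ys stands for y (x) ys.\<close>
definition tensor :: "('i, 'a) crys \<Rightarrow> ('i, 'a list) crys \<Rightarrow> ('i, 'a list) crys" where
  "tensor C D = \<lparr> wt = (\<lambda>xs. case xs of [] \<Rightarrow> (\<lambda>_. 0)
                        | y # ys \<Rightarrow> (\<lambda>k. wt C y k + wt D ys k)),
     ee = (\<lambda>i xs. case xs of [] \<Rightarrow> None
              | y # ys \<Rightarrow> (if eps D i ys \<le> phi C i y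
                          then map_option (\<lambda>z. z # ys) (ee C i y)
                          else map_option (\<lambda>zs. y # zs) (ee D i ys))),
     ff = (\<lambda>i xs. case xs of [] \<Rightarrow> None
              | y # ys \<Rightarrow> (if eps D i ys < phi C i y
                          then map_option (\<lambda>z. z # ys) (ff C i y)
                          else map_option (\<lambda>zs. y # zs) (ff D i ys))) \<rparr>"

definition single :: "('i, 'a) crys \<Rightarrow> ('i, 'a list) crys" where
  "single C = \<lparr> wt = (\<lambda>xs. case xs of [y] \<Rightarrow> wt C y | _ \<Rightarrow> (\<lambda>_. 0)),
     ee = (\<lambda>i xs. case xs of [y] \<Rightarrow> map_option (\<lambda>z. [z]) (ee C i y) | _ \<Rightarrow> None),
     ff = (\<lambda>i xs. case xs of [y] \<Rightarrow> map_option (\<lambda>z. [z]) (ff C i y) | _ \<Rightarrow> None) \<rparr>"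

text \<open>tpow C j is B^{(x)(j+1)} on lists [b, b_j, ..., b_1] of length j+1,
 nested as b (x) (b_j (x) (... (x) b_1)).\<close>
primrec tpow :: "('i, 'a) crys \<Rightarrow> nat \<Rightarrow> ('i, 'a list) crys" where
  "tpow C 0 = single C"
| "tpow C (Suc j) = tensor C (tpow C j)"

definition Pj :: "'a set \<Rightarrow> ('i, 'a) crys \<Rightarrow> nat \<Rightarrow> 'a \<Rightarrow> 'i wP \<Rightarrow> 'a list set" where
  "Pj B C j b mu = {b # bs | bs. length bs = j \<and> set bs \<subseteq> B
        \<and> (\<lambda>k. \<Sum>x\<leftarrow>bs. wt C x k) = cl mu}"

end

theory Submission
  imports Defs
begin


definition itr :: "('a \<Rightarrow> 'a option) \<Rightarrow> nat \<Rightarrow> 'a \<Rightarrow> 'a option" where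
  "itr g k x = ((\<lambda>ox. Option.bind ox g) ^^ k) (Some x)"

definition tp :: "('a \<Rightarrow> 'a option) \<Rightarrow> 'a \<Rightarrow> nat" where
  "tp g x = (GREATEST k. itr g k x \<noteq> None)"

definition trm :: "('a \<Rightarrow> 'a option) \<Rightarrow> 'a \<Rightarrow> bool" where
  "trm g x \<longleftrightarrow> (\<exists>N. itr g N x = None)"

lemma fiter_itr: "fiter D i = itr (ff D i)"
  by (auto simp: fiter_def itr_def fun_eq_iff)
lemma eiter_itr: "eiter D i = itr (ee D i)"
  by (auto simp: eiter_def itr_def fun_eq_iff)
lemma phi_tp: "phi D i = tp (ff D i)"
  by (auto simp: phi_def tp_def fiter_itr fun_eq_iff)
lemma eps_tp: "eps D i = tp (ee D i)"
  by (auto simp: eps_def tp_def eiter_itr fun_eq_iff)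

lemma itr_0[simp]: "itr g 0 x = Some x" by (simp add: itr_def)

lemma itr_Suc': "itr g (Suc k) x = Option.bind (itr g k x) g"
  by (simp add: itr_def)

lemma funpow_None: "((\<lambda>ox. Option.bind ox (g::'a \<Rightarrow> 'a option)) ^^ a) None = None"
  by (induction a) simp_all

lemma itr_add: "itr g (a + b) x = Option.bind (itr g b x) (itr g a)"
proof -
  have "itr g (a + b) x = ((\<lambda>ox. Option.bind ox g) ^^ a) (itr g b x)"
    by (simp add: itr_def funpow_add)
  then show ?thesis
    by (cases "itr g b x") (auto simp: funpow_None itr_def)
qed

lemma itr_Suc: "itr g (Suc k) x = Option.bind (g x) (itr g k)"
  using itr_add[of g k 1 x] by (simp add: itr_def)

lemma itr_mono_None: "itr g k x = None \<Longrightarrow> k \<le> k' \<Longrightarrow> itr g k' x = None"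
  using itr_add[of g "k' - k" k x] by simp

lemma tp_char: "trm g x \<Longrightarrow> (itr g k x \<noteq> None \<longleftrightarrow> k \<le> tp g x)"
proof -
  assume "trm g x"
  then obtain N where N: "itr g N x = None" unfolding trm_def by blast
  have bnd: "\<forall>y. itr g y x \<noteq> None \<longrightarrow> y \<le> N"
    using N itr_mono_None by (metis nle_le)
  have P0: "itr g 0 x \<noteq> None" by simp
  have bnd': "\<And>y. itr g y x \<noteq> None \<Longrightarrow> y \<le> N" using bnd by blast
  have G: "itr g (tp g x) x \<noteq> None"
    unfolding tp_def by (rule GreatestI_nat[of "\<lambda>k. itr g k x \<noteq> None" 0 N, OF P0 bnd'])
  show ?thesis
  proof
    assume "itr g k x \<noteq> None"
    then show "k \<le> tp g x" unfolding tp_def by (rule Greatest_le_nat[of "\<lambda>k. itr g k x \<noteq> None" k N, OF _ bnd'])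
  next
    assume kle: "k \<le> tp g x"
    show "itr g k x \<noteq> None"
    proof
      assume "itr g k x = None"
      then have "itr g (tp g x) x = None" using kle by (rule itr_mono_None)
      then show False using G by simp
    qed
  qed
qed

lemma tp_Some: assumes "trm g x" "g x = Some y"
  shows "trm g y" "tp g x = Suc (tp g y)"
proof -
  obtain N where N: "itr g N x = None" using assms(1) unfolding trm_def by blast
  have s: "itr g (Suc k) x = itr g k y" for k using assms(2) by (simp add: itr_Suc)
  have "itr g (Suc N) x = None" using itr_mono_None[OF N] by simp
  then show ty: "trm g y" using s unfolding trm_def by auto
  have E: "(Suc k \<le> tp g x) = (k \<le> tp g y)" for k
    using tp_char[OF assms(1), of "Suc k"] tp_char[OF ty, of k] s[of k] by simp
  have p: "0 < tp g x" using tp_char[OF assms(1), of 1] assms(2) by (simp add: itr_Suc)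
  have a: "Suc (tp g y) \<le> tp g x" using E[of "tp g y"] by simp
  have b: "tp g x - 1 \<le> tp g y" using E[of "tp g x - 1"] p by simp
  show "tp g x = Suc (tp g y)" using a b by linarith
qed

lemma tp_None: assumes "trm g x" "g x = None" shows "tp g x = 0"
  using tp_char[OF assms(1), of 1] assms(2) by (simp add: itr_Suc)

lemma tp_pos: assumes "trm g x" "0 < tp g x" shows "\<exists>y. g x = Some y"
  using tp_None[OF assms(1)] assms(2) by fastforce


definition reg :: "('i \<Rightarrow> 'i \<Rightarrow> int) \<Rightarrow> 'i \<Rightarrow> ('i, 'a) crys \<Rightarrow> 'a set \<Rightarrow> bool" where
  "reg A i D S \<longleftrightarrow>
     (\<forall>x\<in>S. \<forall>y. ff D i x = Some y \<longrightarrow> y \<in> S \<and> ee D i y = Some x \<and> wt D y = (\<lambda>k. wt D x k - A k i))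
   \<and> (\<forall>x\<in>S. \<forall>y. ee D i x = Some y \<longrightarrow> y \<in> S \<and> ff D i y = Some x)
   \<and> (\<forall>x\<in>S. trm (ff D i) x) \<and> (\<forall>x\<in>S. trm (ee D i) x)
   \<and> (\<forall>x\<in>S. int (phi D i x) - int (eps D i x) = wt D x i)"

context
  fixes A :: "'i \<Rightarrow> 'i \<Rightarrow> int" and i :: 'i and D :: "('i, 'a) crys" and S :: "'a set"
  assumes R: "reg A i D S"
begin

lemma R1: "x \<in> S \<Longrightarrow> ff D i x = Some y \<Longrightarrow> y \<in> S \<and> ee D i y = Some x \<and> wt D y = (\<lambda>k. wt D x k - A k i)"
  using R unfolding reg_def by (elim conjE) (drule bspec, assumption, erule allE, erule mp, assumption)
lemma R2: "x \<in> S \<Longrightarrow> ee D i x = Some y \<Longrightarrow> y \<in> S \<and> ff D i y = Some x"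
  using R unfolding reg_def by (elim conjE) (drule bspec, assumption, erule allE, erule mp, assumption)
lemma R_trm1: "x \<in> S \<Longrightarrow> trm (ff D i) x"
  using conjunct1[OF conjunct2[OF conjunct2[OF R[unfolded reg_def]]]] by blast
lemma R_trm2: "x \<in> S \<Longrightarrow> trm (ee D i) x"
  using conjunct1[OF conjunct2[OF conjunct2[OF conjunct2[OF R[unfolded reg_def]]]]] by blast
lemmas R_trm = R_trm1 R_trm2
lemma R_wt: "x \<in> S \<Longrightarrow> int (phi D i x) - int (eps D i x) = wt D x i"
  using R unfolding reg_def by (elim conjE) (drule bspec, assumption, assumption)

lemma R_ff: assumes "x \<in> S" "ff D i x = Some y"
  shows "y \<in> S" "ee D i y = Some x" "wt D y = (\<lambda>k. wt D x k - A k i)"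
    "phi D i x = Suc (phi D i y)" "eps D i y = Suc (eps D i x)"
proof -
  show y: "y \<in> S" "ee D i y = Some x" "wt D y = (\<lambda>k. wt D x k - A k i)"
    using R1[OF assms] by simp_all
  have t1: "trm (ff D i) x" "trm (ee D i) y" using R_trm assms(1) y(1) by simp_all
  show "phi D i x = Suc (phi D i y)" unfolding phi_tp
    using tp_Some(2)[OF t1(1) assms(2)] .
  show "eps D i y = Suc (eps D i x)" unfolding eps_tp
    using tp_Some(2)[OF t1(2) y(2)] .
qed

lemma R_ee: assumes "x \<in> S" "ee D i x = Some y"
  shows "y \<in> S" "ff D i y = Some x" "eps D i x = Suc (eps D i y)" "phi D i y = Suc (phi D i x)"
proof -
  show y: "y \<in> S" "ff D i y = Some x"
    using R2[OF assms] by simp_all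
  show "eps D i x = Suc (eps D i y)" by (rule R_ff(5)[OF y])
  show "phi D i y = Suc (phi D i x)" by (rule R_ff(4)[OF y])
qed

lemma R_phi0: "x \<in> S \<Longrightarrow> ff D i x = None \<longleftrightarrow> phi D i x = 0"
  unfolding phi_tp using tp_None[OF R_trm(1), of x] tp_Some(2)[OF R_trm(1), of x] by (cases "ff D i x") auto
lemma R_eps0: "x \<in> S \<Longrightarrow> ee D i x = None \<longleftrightarrow> eps D i x = 0"
  unfolding eps_tp using tp_None[OF R_trm(2), of x] tp_Some(2)[OF R_trm(2), of x] by (cases "ee D i x") auto

lemma R_fiter_dom: "x \<in> S \<Longrightarrow> fiter D i k x \<noteq> None \<longleftrightarrow> k \<le> phi D i x"
  unfolding fiter_itr phi_tp by (rule tp_char[OF R_trm(1)])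
lemma R_eiter_dom: "x \<in> S \<Longrightarrow> eiter D i k x \<noteq> None \<longleftrightarrow> k \<le> eps D i x"
  unfolding eiter_itr eps_tp by (rule tp_char[OF R_trm(2)])

lemma R_fiter: "x \<in> S \<Longrightarrow> fiter D i k x = Some y \<Longrightarrow>
   y \<in> S \<and> eiter D i k y = Some x \<and> wt D y = (\<lambda>l. wt D x l - int k * A l i)
   \<and> phi D i y = phi D i x - k \<and> eps D i y = eps D i x + k"
proof (induction k arbitrary: y)
  case 0
  then show ?case by (simp add: fiter_itr eiter_itr)
next
  case (Suc k)
  from Suc.prems obtain z where z: "fiter D i k x = Some z" "ff D i z = Some y"
    unfolding fiter_itr itr_Suc' by (cases "itr (ff D i) k x") auto
  note IH = Suc.IH[OF Suc.prems(1) z(1)]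
  have zS: "z \<in> S" and e1: "eiter D i k z = Some x" and w1: "wt D z = (\<lambda>l. wt D x l - int k * A l i)"
    and p1: "phi D i z = phi D i x - k" and q1: "eps D i z = eps D i x + k" using IH by blast+
  note F = R_ff[OF zS z(2)]
  have "eiter D i (Suc k) y = Some x" using F(2) e1 by (simp add: eiter_itr itr_Suc)
  moreover have "wt D y = (\<lambda>l. wt D x l - int (Suc k) * A l i)"
    using F(3) w1 by (simp add: fun_eq_iff algebra_simps)
  moreover have "phi D i y = phi D i x - Suc k" using F(4) p1 by simp
  moreover have "eps D i y = eps D i x + Suc k" using F(5) q1 by simp
  ultimately show ?case using F(1) by blast
qed

lemma R_eiter: "x \<in> S \<Longrightarrow> eiter D i k x = Some y \<Longrightarrow>
   y \<in> S \<and> fiter D i k y = Some x \<and> wt D y = (\<lambda>l. wt D x l + int k * A l i)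
   \<and> eps D i y = eps D i x - k \<and> phi D i y = phi D i x + k"
proof (induction k arbitrary: y)
  case 0
  then show ?case by (simp add: fiter_itr eiter_itr)
next
  case (Suc k)
  from Suc.prems obtain z where z: "eiter D i k x = Some z" "ee D i z = Some y"
    unfolding eiter_itr itr_Suc' by (cases "itr (ee D i) k x") auto
  note IH = Suc.IH[OF Suc.prems(1) z(1)]
  have zS: "z \<in> S" and e1: "fiter D i k z = Some x" and w1: "wt D z = (\<lambda>l. wt D x l + int k * A l i)"
    and p1: "eps D i z = eps D i x - k" and q1: "phi D i z = phi D i x + k" using IH by blast+
  note F = R_ee[OF zS z(2)]
  note G = R_ff[OF F(1) F(2)]
  have "fiter D i (Suc k) y = Some x" using F(2) e1 by (simp add: fiter_itr itr_Suc)
  moreover have "wt D y = (\<lambda>l. wt D x l + int (Suc k) * A l i)"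
    using G(3) w1 by (simp add: fun_eq_iff algebra_simps)
  moreover have "eps D i y = eps D i x - Suc k" using F(3) p1 by simp
  moreover have "phi D i y = phi D i x + Suc k" using F(4) q1 by simp
  ultimately show ?case using F(1) by blast
qed
end


lemma tp_eq: assumes "\<And>k. itr g k x \<noteq> None \<longleftrightarrow> k \<le> M"
  shows "trm g x" "tp g x = M"
proof -
  show t: "trm g x" unfolding trm_def using assms[of "Suc M"] by auto
  show "tp g x = M" using tp_char[OF t] assms by (metis le_antisym le_refl)
qed

definition Tcar :: "'a set \<Rightarrow> 'a list set \<Rightarrow> 'a list set" where
  "Tcar B S = {y # ys | y ys. y \<in> B \<and> ys \<in> S}"

context
  fixes A :: "'i \<Rightarrow> 'i \<Rightarrow> int" and i :: 'i and C :: "('i, 'a) crys" and B :: "'a set"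
    and D :: "('i, 'a list) crys" and S :: "'a list set"
  assumes RC: "reg A i C B" and RD: "reg A i D S"
begin

lemma ff_T: "ff (tensor C D) i (y # ys) = (if eps D i ys < phi C i y
   then map_option (\<lambda>z. z # ys) (ff C i y) else map_option (\<lambda>zs. y # zs) (ff D i ys))"
  by (simp add: tensor_def)
lemma ee_T: "ee (tensor C D) i (y # ys) = (if eps D i ys \<le> phi C i y
   then map_option (\<lambda>z. z # ys) (ee C i y) else map_option (\<lambda>zs. y # zs) (ee D i ys))"
  by (simp add: tensor_def)
lemma wt_T: "wt (tensor C D) (y # ys) = (\<lambda>k. wt C y k + wt D ys k)"
  by (simp add: tensor_def)

lemma T_fiter: "y \<in> B \<Longrightarrow> ys \<in> S \<Longrightarrow> fiter (tensor C D) i k (y # ys) =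
  (case fiter C i (min k (phi C i y - eps D i ys)) y of None \<Rightarrow> None
   | Some y'' \<Rightarrow> (case fiter D i (k - (phi C i y - eps D i ys)) ys of None \<Rightarrow> None
   | Some ys'' \<Rightarrow> Some (y'' # ys'')))"
proof (induction k arbitrary: y ys)
  case 0
  then show ?case by (simp add: fiter_itr)
next
  case (Suc k)
  show ?case
  proof (cases "eps D i ys < phi C i y")
    case True
    then obtain y' where y': "ff C i y = Some y'"
      using R_phi0[OF RC Suc.prems(1)] by fastforce
    note F = R_ff[OF RC Suc.prems(1) y']
    have d: "phi C i y - eps D i ys = Suc (phi C i y' - eps D i ys)" using F True by simp
    have L: "fiter (tensor C D) i (Suc k) (y # ys) = fiter (tensor C D) i k (y' # ys)"
      using True y' by (simp add: fiter_itr itr_Suc ff_T)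
    have m: "min (Suc k) (Suc (phi C i y' - eps D i ys)) = Suc (min k (phi C i y' - eps D i ys))" by simp
    have c: "fiter C i (Suc l) y = fiter C i l y'" for l using y' by (simp add: fiter_itr itr_Suc)
    show ?thesis unfolding L Suc.IH[OF F(1) Suc.prems(2)] d m c diff_Suc_Suc ..
  next
    case False
    then have d: "phi C i y - eps D i ys = 0" by simp
    show ?thesis
    proof (cases "ff D i ys")
      case None
      then show ?thesis using False d by (simp add: fiter_itr itr_Suc ff_T)
    next
      case (Some ys')
      note F = R_ff[OF RD Suc.prems(2) Some]
      have L: "fiter (tensor C D) i (Suc k) (y # ys) = fiter (tensor C D) i k (y # ys')"
        using False Some by (simp add: fiter_itr itr_Suc ff_T)
      have d': "phi C i y - eps D i ys' = 0" using F d by simp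
      have c: "fiter D i (Suc l) ys = fiter D i l ys'" for l using Some by (simp add: fiter_itr itr_Suc)
      show ?thesis unfolding L Suc.IH[OF Suc.prems(1) F(1)] d d' diff_zero c[of k] by simp
    qed
  qed
qed

lemma T_eiter: "y \<in> B \<Longrightarrow> ys \<in> S \<Longrightarrow> eiter (tensor C D) i k (y # ys) =
  (case eiter C i (k - (eps D i ys - phi C i y)) y of None \<Rightarrow> None
   | Some y'' \<Rightarrow> (case eiter D i (min k (eps D i ys - phi C i y)) ys of None \<Rightarrow> None
   | Some ys'' \<Rightarrow> Some (y'' # ys'')))"
proof (induction k arbitrary: y ys)
  case 0
  then show ?case by (simp add: eiter_itr)
next
  case (Suc k)
  show ?case
  proof (cases "eps D i ys \<le> phi C i y")
    case True
    then have d: "eps D i ys - phi C i y = 0" by simp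
    show ?thesis
    proof (cases "ee C i y")
      case None
      then show ?thesis using True d by (simp add: eiter_itr itr_Suc ee_T)
    next
      case (Some y')
      note F = R_ee[OF RC Suc.prems(1) Some]
      have L: "eiter (tensor C D) i (Suc k) (y # ys) = eiter (tensor C D) i k (y' # ys)"
        using True Some by (simp add: eiter_itr itr_Suc ee_T)
      have d': "eps D i ys - phi C i y' = 0" using F d by simp
      have c: "eiter C i (Suc l) y = eiter C i l y'" for l using Some by (simp add: eiter_itr itr_Suc)
      show ?thesis unfolding L Suc.IH[OF F(1) Suc.prems(2)] d d' diff_zero c[of k] min_0R ..
    qed
  next
    case False
    then obtain ys' where ys': "ee D i ys = Some ys'"
      using R_eps0[OF RD Suc.prems(2)] by fastforce
    note F = R_ee[OF RD Suc.prems(2) ys']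
    have d: "eps D i ys - phi C i y = Suc (eps D i ys' - phi C i y)" using F False by simp
    have L: "eiter (tensor C D) i (Suc k) (y # ys) = eiter (tensor C D) i k (y # ys')"
      using False ys' by (simp add: eiter_itr itr_Suc ee_T)
    have m: "min (Suc k) (Suc (eps D i ys' - phi C i y)) = Suc (min k (eps D i ys' - phi C i y))" by simp
    have c: "eiter D i (Suc l) ys = eiter D i l ys'" for l using ys' by (simp add: eiter_itr itr_Suc)
    show ?thesis unfolding L Suc.IH[OF Suc.prems(1) F(1)] d m c by simp
  qed
qed

lemma T_fdom: assumes "y \<in> B" "ys \<in> S"
  shows "fiter (tensor C D) i k (y # ys) \<noteq> None \<longleftrightarrow> k \<le> phi D i ys + (phi C i y - eps D i ys)"
proof -
  have a: "fiter C i (min k (phi C i y - eps D i ys)) y \<noteq> None"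
    using R_fiter_dom[OF RC assms(1)] by simp
  have b: "fiter D i (k - (phi C i y - eps D i ys)) ys \<noteq> None \<longleftrightarrow> k \<le> phi D i ys + (phi C i y - eps D i ys)"
    unfolding R_fiter_dom[OF RD assms(2)] by arith
  show ?thesis unfolding T_fiter[OF assms] using a b by (auto split: option.split)
qed

lemma T_edom: assumes "y \<in> B" "ys \<in> S"
  shows "eiter (tensor C D) i k (y # ys) \<noteq> None \<longleftrightarrow> k \<le> eps C i y + (eps D i ys - phi C i y)"
proof -
  have a: "eiter D i (min k (eps D i ys - phi C i y)) ys \<noteq> None"
    using R_eiter_dom[OF RD assms(2)] by simp
  have b: "eiter C i (k - (eps D i ys - phi C i y)) y \<noteq> None \<longleftrightarrow> k \<le> eps C i y + (eps D i ys - phi C i y)"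
    unfolding R_eiter_dom[OF RC assms(1)] by arith
  show ?thesis unfolding T_eiter[OF assms] using a b by (auto split: option.split)
qed

lemma T_phi: assumes "y \<in> B" "ys \<in> S"
  shows "trm (ff (tensor C D) i) (y # ys)" "phi (tensor C D) i (y # ys) = phi D i ys + (phi C i y - eps D i ys)"
  using tp_eq[of "ff (tensor C D) i" "y # ys", OF T_fdom[OF assms, unfolded fiter_itr]]
  by (simp_all add: phi_tp)

lemma T_eps: assumes "y \<in> B" "ys \<in> S"
  shows "trm (ee (tensor C D) i) (y # ys)" "eps (tensor C D) i (y # ys) = eps C i y + (eps D i ys - phi C i y)"
  using tp_eq[of "ee (tensor C D) i" "y # ys", OF T_edom[OF assms, unfolded eiter_itr]]
  by (simp_all add: eps_tp)

lemma T_reg: "reg A i (tensor C D) (Tcar B S)"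
  unfolding reg_def
proof (intro conjI; (intro ballI allI impI)?)
  fix x z assume x: "x \<in> Tcar B S" and f: "ff (tensor C D) i x = Some z"
  from x obtain y ys where xy: "x = y # ys" "y \<in> B" "ys \<in> S" unfolding Tcar_def by blast
  show "z \<in> Tcar B S \<and> ee (tensor C D) i z = Some x \<and> wt (tensor C D) z = (\<lambda>k. wt (tensor C D) x k - A k i)"
  proof (cases "eps D i ys < phi C i y")
    case True
    then obtain y' where y': "ff C i y = Some y'" "z = y' # ys"
      using f unfolding xy(1) ff_T by (cases "ff C i y") auto
    note F = R_ff[OF RC xy(2) y'(1)]
    have 1: "z \<in> Tcar B S" using F(1) xy(3) y'(2) unfolding Tcar_def by blast
    have 2: "ee (tensor C D) i z = Some x" using True F(2,4) unfolding y'(2) xy(1) ee_T by simp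
    have 3: "wt (tensor C D) z = (\<lambda>k. wt (tensor C D) x k - A k i)"
      unfolding y'(2) xy(1) wt_T F(3) by (simp add: fun_eq_iff)
    show ?thesis using 1 2 3 by blast
  next
    case False
    then obtain ys' where y': "ff D i ys = Some ys'" "z = y # ys'"
      using f unfolding xy(1) ff_T by (cases "ff D i ys") auto
    note F = R_ff[OF RD xy(3) y'(1)]
    have 1: "z \<in> Tcar B S" using F(1) xy(2) y'(2) unfolding Tcar_def by blast
    have 2: "ee (tensor C D) i z = Some x" using False F(2,5) unfolding y'(2) xy(1) ee_T by simp
    have 3: "wt (tensor C D) z = (\<lambda>k. wt (tensor C D) x k - A k i)"
      unfolding y'(2) xy(1) wt_T F(3) by (simp add: fun_eq_iff)
    show ?thesis using 1 2 3 by blast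
  qed
next
  fix x z assume x: "x \<in> Tcar B S" and f: "ee (tensor C D) i x = Some z"
  from x obtain y ys where xy: "x = y # ys" "y \<in> B" "ys \<in> S" unfolding Tcar_def by blast
  show "z \<in> Tcar B S \<and> ff (tensor C D) i z = Some x"
  proof (cases "eps D i ys \<le> phi C i y")
    case True
    then obtain y' where y': "ee C i y = Some y'" "z = y' # ys"
      using f unfolding xy(1) ee_T by (cases "ee C i y") auto
    note F = R_ee[OF RC xy(2) y'(1)]
    have 1: "z \<in> Tcar B S" using F(1) xy(3) y'(2) unfolding Tcar_def by blast
    have 2: "ff (tensor C D) i z = Some x" using True F(2,4) unfolding y'(2) xy(1) ff_T by simp
    show ?thesis using 1 2 by blast
  next
    case False
    then obtain ys' where y': "ee D i ys = Some ys'" "z = y # ys'"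
      using f unfolding xy(1) ee_T by (cases "ee D i ys") auto
    note F = R_ee[OF RD xy(3) y'(1)]
    have 1: "z \<in> Tcar B S" using F(1) xy(2) y'(2) unfolding Tcar_def by blast
    have 2: "ff (tensor C D) i z = Some x" using False F(2,3) unfolding y'(2) xy(1) ff_T by simp
    show ?thesis using 1 2 by blast
  qed
next
  fix x assume x: "x \<in> Tcar B S"
  from x obtain y ys where xy: "x = y # ys" "y \<in> B" "ys \<in> S" unfolding Tcar_def by blast
  show "trm (ff (tensor C D) i) x" "trm (ee (tensor C D) i) x"
    using T_phi T_eps xy by auto
  have w1: "int (phi C i y) - int (eps C i y) = wt C y i" using R_wt[OF RC xy(2)] .
  have w2: "int (phi D i ys) - int (eps D i ys) = wt D ys i" using R_wt[OF RD xy(3)] .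
  show "int (phi (tensor C D) i x) - int (eps (tensor C D) i x) = wt (tensor C D) x i"
    unfolding xy T_phi[OF xy(2,3)] T_eps[OF xy(2,3)] wt_T using w1 w2 by linarith
qed

end




lemma int_diff_ge: "int a - int b \<le> int (a - b)"
  by (cases "b \<le> a") auto

lemma fiter_add: "fiter D i (a + t) x = Option.bind (fiter D i t x) (fiter D i a)"
  unfolding fiter_itr by (rule itr_add)

lemma main_abs:
  fixes A :: "'i \<Rightarrow> 'i \<Rightarrow> int" and C :: "('i, 'a) crys" and D :: "('i, 'a list) crys"
    and mu :: "'i wP" and n :: int
  assumes RC: "reg A i C B" and RD: "reg A i D S" and Aii: "A i i = 2"
    and bB: "b \<in> B" and mdef: "m = phi C i b" and ndef: "n = fst mu i + int m" and n0: "n \<ge> 0"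
  defines "X \<equiv> (\<Union>t\<in>{0..m}. {the (fiter C i t b) # p | p. p \<in> S \<and> wt D p = (\<lambda>k. fst mu k + int t * A k i)})"
    and "Y \<equiv> (\<Union>t\<in>{0..m}. {the (fiter C i t b) # p | p. p \<in> S \<and> wt D p = (\<lambda>k. fst mu k + (int t - n) * A k i)})"
  shows "(\<forall>x\<in>X. fiter (tensor C D) i (nat n) x \<noteq> None)
     \<and> bij_betw (\<lambda>x. the (fiter (tensor C D) i (nat n) x)) X Y"
proof -
  define T where "T = tensor C D"
  define N where "N = nat n"
  have Nn: "int N = n" using n0 N_def by simp
  have RT: "reg A i T (Tcar B S)" unfolding T_def by (rule T_reg[OF RC RD])
  have bt: "\<exists>b'. fiter C i t b = Some b' \<and> b' \<in> B \<and> phi C i b' = m - t \<and> eps C i b' = eps C i b + t"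
    if tm: "t \<le> m" for t
  proof -
    obtain b' where b': "fiter C i t b = Some b'" using R_fiter_dom[OF RC bB, of t] tm mdef by auto
    show ?thesis using R_fiter[OF RC bB b'] b' mdef by auto
  qed
  have XT: "X \<subseteq> Tcar B S"
  proof
    fix x assume "x \<in> X"
    then obtain t p where "t \<le> m" "x = the (fiter C i t b) # p" "p \<in> S" unfolding X_def by auto
    then show "x \<in> Tcar B S" using bt unfolding Tcar_def by fastforce
  qed
  have dom: "fiter T i N x \<noteq> None" if xX: "x \<in> X" for x
  proof -
    obtain t p where t: "t \<le> m" "x = the (fiter C i t b) # p" "p \<in> S"
      and wp: "wt D p = (\<lambda>k. fst mu k + int t * A k i)" using xX unfolding X_def by auto
    obtain b' where b': "fiter C i t b = Some b'" "b' \<in> B" "phi C i b' = m - t" using bt[OF t(1)] by auto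
    have w: "int (phi D i p) - int (eps D i p) = fst mu i + 2 * int t"
      using R_wt[OF RD t(3)] wp Aii by simp
    have "int N \<le> int (phi D i p + (phi C i b' - eps D i p))"
      using int_diff_ge[of "phi C i b'" "eps D i p"] w b'(3) t(1) Nn ndef by simp
    then have "N \<le> phi D i p + (phi C i b' - eps D i p)" by linarith
    then show ?thesis unfolding T_def t(2) b'(1) using T_fdom[OF RC RD b'(2) t(3)] by simp
  qed
  have inj: "inj_on (\<lambda>x. the (fiter T i N x)) X"
  proof (rule inj_onI)
    fix x1 x2 assume x: "x1 \<in> X" "x2 \<in> X" and eq: "the (fiter T i N x1) = the (fiter T i N x2)"
    obtain z1 where z1: "fiter T i N x1 = Some z1" using dom[OF x(1)] by auto
    obtain z2 where z2: "fiter T i N x2 = Some z2" using dom[OF x(2)] by auto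
    have "z1 = z2" using eq z1 z2 by simp
    moreover have "eiter T i N z1 = Some x1" using R_fiter[OF RT _ z1] x(1) XT by blast
    moreover have "eiter T i N z2 = Some x2" using R_fiter[OF RT _ z2] x(2) XT by blast
    ultimately show "x1 = x2" by simp
  qed
  have sub1: "(\<lambda>x. the (fiter T i N x)) ` X \<subseteq> Y"
  proof
    fix z assume "z \<in> (\<lambda>x. the (fiter T i N x)) ` X"
    then obtain x where xX: "x \<in> X" and zx: "z = the (fiter T i N x)" by blast
    obtain t p where t: "t \<le> m" "x = the (fiter C i t b) # p" "p \<in> S"
      and wp: "wt D p = (\<lambda>k. fst mu k + int t * A k i)" using xX unfolding X_def by auto
    obtain b' where b': "fiter C i t b = Some b'" "b' \<in> B" using bt[OF t(1)] by auto
    define d where "d = phi C i b' - eps D i p"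
    obtain z' where z': "fiter T i N x = Some z'" using dom[OF xX] by auto
    have e: "fiter T i N x = (case fiter C i (min N d) b' of None \<Rightarrow> None
      | Some y'' \<Rightarrow> (case fiter D i (N - d) p of None \<Rightarrow> None | Some ys'' \<Rightarrow> Some (y'' # ys'')))"
      unfolding T_def t(2) b'(1) d_def using T_fiter[OF RC RD b'(2) t(3)] by simp
    obtain y'' p'' where yp: "fiter C i (min N d) b' = Some y''" "fiter D i (N - d) p = Some p''"
      "z = y'' # p''"
      using z' zx unfolding e by (auto split: option.splits)
    define a where "a = min N d"
    define c where "c = N - d"
    have ac: "int a + int c = n" using Nn unfolding a_def c_def by linarith
    have fa: "fiter C i (a + t) b = Some y''" unfolding fiter_add b'(1) using yp(1) a_def by simp
    have am: "t + a \<le> m" using R_fiter_dom[OF RC bB, of "a + t"] fa mdef by (simp add: add.commute)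
    note Fp = R_fiter[OF RD t(3) yp(2)]
    have wp'': "wt D p'' = (\<lambda>k. fst mu k + (int (t + a) - n) * A k i)"
      using Fp wp ac unfolding c_def[symmetric]
      by (auto simp: fun_eq_iff algebra_simps)
    show "z \<in> Y" unfolding Y_def
      using am Fp fa yp(3) wp'' by (auto simp: add.commute intro!: bexI[of _ "t + a"])
  qed
  have sub2: "Y \<subseteq> (\<lambda>x. the (fiter T i N x)) ` X"
  proof
    fix z assume zY: "z \<in> Y"
    obtain t p where t: "t \<le> m" "z = the (fiter C i t b) # p" "p \<in> S"
      and wp: "wt D p = (\<lambda>k. fst mu k + (int t - n) * A k i)" using zY unfolding Y_def by auto
    obtain b' where b': "fiter C i t b = Some b'" "b' \<in> B" "phi C i b' = m - t" "eps C i b' = eps C i b + t"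
      using bt[OF t(1)] by auto
    define d where "d = eps D i p - phi C i b'"
    have w: "int (phi D i p) - int (eps D i p) = fst mu i + 2 * (int t - n)"
      using R_wt[OF RD t(3)] wp Aii by simp
    have dge: "n - int t \<le> int d"
      using int_diff_ge[of "eps D i p" "phi C i b'"] w b'(3) t(1) ndef unfolding d_def by simp
    have "N \<le> eps C i b' + d" using dge b'(4) Nn by linarith
    then obtain x where x: "eiter T i N z = Some x"
      using T_edom[OF RC RD b'(2) t(3), of N] unfolding T_def t(2) b'(1) d_def by auto
    have e: "eiter T i N z = (case eiter C i (N - d) b' of None \<Rightarrow> None
      | Some y'' \<Rightarrow> (case eiter D i (min N d) p of None \<Rightarrow> None | Some ys'' \<Rightarrow> Some (y'' # ys'')))"
      unfolding T_def t(2) b'(1) d_def using T_eiter[OF RC RD b'(2) t(3)] by simp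
    obtain y'' p'' where yp: "eiter C i (N - d) b' = Some y''" "eiter D i (min N d) p = Some p''"
      "x = y'' # p''"
      using x unfolding e by (auto split: option.splits)
    define a where "a = N - d"
    define c where "c = min N d"
    have ac: "int a + int c = n" using Nn unfolding a_def c_def by linarith
    have at: "a \<le> t" using dge Nn unfolding a_def by linarith
    have tam: "t - a \<le> m" using t(1) by simp
    obtain w where w: "fiter C i (t - a) b = Some w" using bt[OF tam] by blast
    have "fiter C i (a + (t - a)) b = fiter C i a w" unfolding fiter_add w by simp
    then have fw: "fiter C i a w = Some b'" using at b'(1) by simp
    have wB: "w \<in> B" using R_fiter[OF RC bB w] by simp
    have "eiter C i a b' = Some w" using R_fiter[OF RC wB fw] by simp
    then have yw: "y'' = w" using yp(1) a_def by simp
    note Fp = R_eiter[OF RD t(3) yp(2)]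
    have wp'': "wt D p'' = (\<lambda>k. fst mu k + int (t - a) * A k i)"
      using Fp wp ac at unfolding c_def[symmetric]
      by (auto simp: fun_eq_iff algebra_simps of_nat_diff)
    have xX: "x \<in> X" unfolding X_def
      using t(1) Fp w yw yp(3) wp'' by (auto intro!: bexI[of _ "t - a"])
    have zT: "z \<in> Tcar B S" using b' t unfolding Tcar_def by auto
    have "fiter T i N x = Some z" using R_eiter[OF RT zT x] by simp
    then show "z \<in> (\<lambda>x. the (fiter T i N x)) ` X" using xX by force
  qed
  show ?thesis unfolding T_def[symmetric] N_def[symmetric]
    using dom inj sub1 sub2 unfolding bij_betw_def by blast
qed




lemma crys_fiter_wt:
  assumes cr: "is_crystal A B C" and Aii: "A i i = 2" and xB: "x \<in> B"
  shows "fiter C i k x = Some y \<Longrightarrow> y \<in> B \<and> wt C y i = wt C x i - 2 * int k"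
proof (induction k arbitrary: y)
  case 0 then show ?case using xB by (simp add: fiter_itr)
next
  case (Suc k)
  from Suc.prems obtain z where z: "fiter C i k x = Some z" "ff C i z = Some y"
    unfolding fiter_itr itr_Suc' by (cases "itr (ff C i) k x") auto
  have zB: "z \<in> B" and wz: "wt C z i = wt C x i - 2 * int k" using Suc.IH[OF z(1)] by auto
  have yB: "y \<in> B" using cr z(2) zB unfolding is_crystal_def by blast
  have "wt C y = (\<lambda>k. wt C z k - A k i)" using cr z(2) zB unfolding is_crystal_def by blast
  then have "wt C y i = wt C z i - 2" using Aii by simp
  then show ?case using yB wz by simp
qed

lemma crys_eiter_wt:
  assumes cr: "is_crystal A B C" and Aii: "A i i = 2" and xB: "x \<in> B"
  shows "eiter C i k x = Some y \<Longrightarrow> y \<in> B \<and> wt C y i = wt C x i + 2 * int k"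
proof (induction k arbitrary: y)
  case 0 then show ?case using xB by (simp add: eiter_itr)
next
  case (Suc k)
  from Suc.prems obtain z where z: "eiter C i k x = Some z" "ee C i z = Some y"
    unfolding eiter_itr itr_Suc' by (cases "itr (ee C i) k x") auto
  have zB: "z \<in> B" and wz: "wt C z i = wt C x i + 2 * int k" using Suc.IH[OF z(1)] by auto
  have yB: "y \<in> B" using cr z(2) zB unfolding is_crystal_def by blast
  have "ff C i y = Some z" using cr z(2) zB yB unfolding is_crystal_def by blast
  then have "wt C z = (\<lambda>k. wt C y k - A k i)" using cr yB unfolding is_crystal_def by blast
  then have "wt C y i = wt C z i + 2" using Aii by simp
  then show ?case using yB wz by simp
qed

lemma crystal_reg:
  assumes cr: "is_crystal A B C" and Aii: "A i i = 2"
  shows "reg A i C B"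
proof -
  have fin: "finite B" using cr unfolding is_crystal_def by blast
  have P1: "\<forall>x\<in>B. \<forall>y. ff C i x = Some y \<longrightarrow> y \<in> B \<and> ee C i y = Some x \<and> wt C y = (\<lambda>k. wt C x k - A k i)"
    using cr unfolding is_crystal_def by blast
  have P2: "\<forall>x\<in>B. \<forall>y. ee C i x = Some y \<longrightarrow> y \<in> B \<and> ff C i y = Some x"
    using cr unfolding is_crystal_def by blast
  have P3: "trm (ff C i) x" if xB: "x \<in> B" for x
  proof -
    define lo where "lo = Min ((\<lambda>y. wt C y i) ` B)"
    have lo: "lo \<le> wt C y i" if "y \<in> B" for y unfolding lo_def using fin that by simp
    define N where "N = nat (wt C x i - lo) + 1"
    have "fiter C i N x = None"
    proof (rule ccontr)
      assume "fiter C i N x \<noteq> None"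
      then obtain y where y: "fiter C i N x = Some y" by auto
      have yy: "y \<in> B" "wt C y i = wt C x i - 2 * int N" using crys_fiter_wt[OF cr Aii xB y] by auto
      have a: "lo \<le> wt C y i" using lo[OF yy(1)] .
      have b: "int N = wt C x i - lo + 1" using lo[OF xB] unfolding N_def by simp
      show False using yy(2) a b lo[OF xB] by linarith
    qed
    then show ?thesis unfolding trm_def fiter_itr by blast
  qed
  have P4: "trm (ee C i) x" if xB: "x \<in> B" for x
  proof -
    define hi where "hi = Max ((\<lambda>y. wt C y i) ` B)"
    have hi: "wt C y i \<le> hi" if "y \<in> B" for y unfolding hi_def using fin that by simp
    define N where "N = nat (hi - wt C x i) + 1"
    have "eiter C i N x = None"
    proof (rule ccontr)
      assume "eiter C i N x \<noteq> None"
      then obtain y where y: "eiter C i N x = Some y" by auto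
      have yy: "y \<in> B" "wt C y i = wt C x i + 2 * int N" using crys_eiter_wt[OF cr Aii xB y] by auto
      have a: "wt C y i \<le> hi" using hi[OF yy(1)] .
      have b: "int N = hi - wt C x i + 1" using hi[OF xB] unfolding N_def by simp
      show False using yy(2) a b hi[OF xB] by linarith
    qed
    then show ?thesis unfolding trm_def eiter_itr by blast
  qed
  have P5: "\<forall>x\<in>B. int (phi C i x) - int (eps C i x) = wt C x i"
    using cr unfolding is_crystal_def by blast
  show ?thesis unfolding reg_def using P1 P2 P3 P4 P5 by blast
qed

lemma itr_cong:
  assumes eq: "\<forall>x\<in>S. g2 x = g1 x" and cl: "\<forall>x\<in>S. \<forall>y. g1 x = Some y \<longrightarrow> y \<in> S"
  shows "x \<in> S \<Longrightarrow> itr g2 k x = itr g1 k x"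
proof (induction k arbitrary: x)
  case 0 then show ?case by simp
next
  case (Suc k)
  show ?case
  proof (cases "g1 x")
    case None then show ?thesis using eq Suc.prems by (simp add: itr_Suc)
  next
    case (Some y)
    then have "y \<in> S" using cl Suc.prems by blast
    then show ?thesis using eq Suc.prems Some Suc.IH by (simp add: itr_Suc)
  qed
qed

lemma reg_cong:
  assumes R: "reg A i D1 S"
    and eq: "\<forall>x\<in>S. ff D2 i x = ff D1 i x \<and> ee D2 i x = ee D1 i x \<and> wt D2 x = wt D1 x"
  shows "reg A i D2 S"
proof -
  have c1: "\<forall>x\<in>S. \<forall>y. ff D1 i x = Some y \<longrightarrow> y \<in> S" using R_ff(1)[OF R] by blast
  have c2: "\<forall>x\<in>S. \<forall>y. ee D1 i x = Some y \<longrightarrow> y \<in> S" using R_ee(1)[OF R] by blast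
  have e1: "\<forall>x\<in>S. ff D2 i x = ff D1 i x" and e2: "\<forall>x\<in>S. ee D2 i x = ee D1 i x"
    using eq by blast+
  have i1: "itr (ff D2 i) k x = itr (ff D1 i) k x" if "x \<in> S" for k x
    using itr_cong[OF e1 c1 that] .
  have i2: "itr (ee D2 i) k x = itr (ee D1 i) k x" if "x \<in> S" for k x
    using itr_cong[OF e2 c2 that] .
  have t1: "phi D2 i x = phi D1 i x" if "x \<in> S" for x
    unfolding phi_tp tp_def using i1[OF that] by simp
  have t2: "eps D2 i x = eps D1 i x" if "x \<in> S" for x
    unfolding eps_tp tp_def using i2[OF that] by simp
  have tr1: "trm (ff D2 i) x" if "x \<in> S" for x
    using R_trm(1)[OF R that] i1[OF that] unfolding trm_def by simp
  have tr2: "trm (ee D2 i) x" if "x \<in> S" for x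
    using R_trm(2)[OF R that] i2[OF that] unfolding trm_def by simp
  show ?thesis unfolding reg_def
  proof (intro conjI; (intro ballI allI impI)?)
    fix x y assume x: "x \<in> S" and f: "ff D2 i x = Some y"
    have f1: "ff D1 i x = Some y" using f eq x by simp
    note F = R_ff[OF R x f1]
    have "y \<in> S" using F by simp
    then show "y \<in> S \<and> ee D2 i y = Some x \<and> wt D2 y = (\<lambda>k. wt D2 x k - A k i)"
      using F eq x by simp
  next
    fix x y assume x: "x \<in> S" and f: "ee D2 i x = Some y"
    have f1: "ee D1 i x = Some y" using f eq x by simp
    note F = R_ee[OF R x f1]
    have "y \<in> S" using F by simp
    then show "y \<in> S \<and> ff D2 i y = Some x"
      using F eq x by simp
  next
    fix x assume x: "x \<in> S"
    show "trm (ff D2 i) x" using tr1[OF x] .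
    show "trm (ee D2 i) x" using tr2[OF x] .
    show "int (phi D2 i x) - int (eps D2 i x) = wt D2 x i"
      using R_wt[OF R x] t1[OF x] t2[OF x] eq x by simp
  qed
qed

definition Ecrys :: "('i, 'a list) crys" where
  "Ecrys = \<lparr> wt = (\<lambda>_ _. 0), ee = (\<lambda>_ _. None), ff = (\<lambda>_ _. None) \<rparr>"

lemma Ecrys_reg: "reg A i (Ecrys :: ('i, 'a list) crys) {[]}"
proof -
  let ?E = "Ecrys :: ('i, 'a list) crys"
  have t1: "trm (ff ?E i) x" for x unfolding trm_def
    by (rule exI[of _ 1]) (simp add: Ecrys_def itr_Suc)
  have t2: "trm (ee ?E i) x" for x unfolding trm_def
    by (rule exI[of _ 1]) (simp add: Ecrys_def itr_Suc)
  have p: "phi ?E i x = 0" for x unfolding phi_tp by (rule tp_None[OF t1]) (simp add: Ecrys_def)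
  have e: "eps ?E i x = 0" for x unfolding eps_tp by (rule tp_None[OF t2]) (simp add: Ecrys_def)
  have f: "ff ?E i x = None" "ee ?E i x = None" "wt ?E x = (\<lambda>_. 0)" for x by (simp_all add: Ecrys_def)
  show ?thesis unfolding reg_def using t1 t2 p e f by simp
qed

definition Lc :: "'a set \<Rightarrow> nat \<Rightarrow> 'a list set" where
  "Lc B j = {xs. length xs = Suc j \<and> set xs \<subseteq> B}"

lemma Tcar_Lc0: "Tcar B {[]} = Lc B 0"
  unfolding Tcar_def Lc_def by (auto simp: length_Suc_conv)

lemma Tcar_LcS: "Tcar B (Lc B j) = Lc B (Suc j)"
  unfolding Tcar_def Lc_def by (auto simp: length_Suc_conv)

lemma single_tensor_eq:
  fixes C :: "('i, 'a) crys"
  assumes RC: "reg A i C B"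
  shows "\<forall>x\<in>Lc B 0. ff (single C) i x = ff (tensor C Ecrys) i x \<and> ee (single C) i x = ee (tensor C Ecrys) i x
     \<and> wt (single C) x = wt (tensor C Ecrys) x"
proof
  fix x assume "x \<in> Lc B 0"
  then obtain y where x: "x = [y]" "y \<in> B" unfolding Lc_def by (auto simp: length_Suc_conv)
  have e0: "eps (Ecrys :: ('i, 'a list) crys) i [] = 0" using R_eps0[OF Ecrys_reg[of A i]] by (simp add: Ecrys_def)
  have f: "ff (single C) i x = ff (tensor C Ecrys) i x"
  proof (cases "0 < phi C i y")
    case True then show ?thesis using x e0 by (simp add: single_def tensor_def)
  next
    case False
    then have "ff C i y = None" using R_phi0[OF RC x(2)] by simp
    then show ?thesis using x e0 False by (simp add: single_def tensor_def Ecrys_def)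
  qed
  have e: "ee (single C) i x = ee (tensor C Ecrys) i x" using x e0 by (simp add: single_def tensor_def)
  have w: "wt (single C) x = wt (tensor C Ecrys) x" using x by (simp add: single_def tensor_def Ecrys_def)
  show "ff (single C) i x = ff (tensor C Ecrys) i x \<and> ee (single C) i x = ee (tensor C Ecrys) i x
     \<and> wt (single C) x = wt (tensor C Ecrys) x" using f e w by blast
qed

lemma tpow_reg:
  assumes RC: "reg A i C B"
  shows "reg A i (tpow C j) (Lc B j)"
proof (induction j)
  case 0
  have "reg A i (tensor C Ecrys) (Lc B 0)"
    using T_reg[OF RC Ecrys_reg] unfolding Tcar_Lc0 .
  then show ?case using reg_cong single_tensor_eq[OF RC] by (simp add: reg_cong)
next
  case (Suc j)
  show ?case using T_reg[OF RC Suc.IH] unfolding Tcar_LcS by simp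
qed

lemma tpow_wt: "xs \<in> Lc B j \<Longrightarrow> wt (tpow C j) xs = (\<lambda>k. \<Sum>x\<leftarrow>xs. wt C x k)"
proof (induction j arbitrary: xs)
  case 0
  then obtain y where "xs = [y]" unfolding Lc_def by (auto simp: length_Suc_conv)
  then show ?case by (simp add: single_def)
next
  case (Suc j)
  then obtain y ys where x: "xs = y # ys" "y \<in> B" "ys \<in> Lc B j" unfolding Lc_def
    by (auto simp: length_Suc_conv)
  then show ?case using Suc.IH[OF x(3)] by (simp add: tensor_def)
qed




lemma final_gen:
  fixes A :: "'i \<Rightarrow> 'i \<Rightarrow> int" and C :: "('i, 'a) crys" and D :: "('i, 'a list) crys"
    and T :: "('i, 'a list) crys" and mu :: "'i wP" and n :: int
  assumes RC: "reg A i C B" and RD: "reg A i D S" and Aii: "A i i = 2"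
    and bB: "b \<in> B" and mdef: "m = phi C i b" and ndef: "n = pairing i mu + int m" and n0: "n \<ge> 0"
    and PjE: "\<And>y nu. Pj B C j y nu = {y # p | p. p \<in> S \<and> wt D p = cl nu}"
    and TE: "\<And>x k. x \<in> Tcar B S \<Longrightarrow> fiter T i k x = fiter (tensor C D) i k x"
  shows "(\<forall>x \<in> (\<Union>t\<in>{0..m}. Pj B C j (the (fiter C i t b))
                    (wadd mu (wscale (int t) (alpha A i0 i)))).
            fiter T i (nat n) x \<noteq> None)
    \<and> bij_betw (\<lambda>x. the (fiter T i (nat n) x))
        (\<Union>t\<in>{0..m}. Pj B C j (the (fiter C i t b)) (wadd mu (wscale (int t) (alpha A i0 i))))
        (\<Union>t\<in>{0..m}. Pj B C j (the (fiter C i t b))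
                    (rrefl A i0 i (wadd mu (wscale (int m - int t) (alpha A i0 i)))))"
proof -
  have ndef': "n = fst mu i + int m" using ndef by (simp add: pairing_def)
  have cl1: "cl (wadd mu (wscale (int t) (alpha A i0 i))) = (\<lambda>k. fst mu k + int t * A k i)" for t
    by (simp add: cl_def wadd_def wscale_def alpha_def)
  have cl2: "cl (rrefl A i0 i (wadd mu (wscale (int m - int t) (alpha A i0 i))))
       = (\<lambda>k. fst mu k + (int t - n) * A k i)" for t
    using Aii ndef' by (simp add: cl_def rrefl_def wadd_def wscale_def alpha_def pairing_def fun_eq_iff algebra_simps)
  define X where "X = (\<Union>t\<in>{0..m}. {the (fiter C i t b) # p | p. p \<in> S \<and> wt D p = (\<lambda>k. fst mu k + int t * A k i)})"
  define Y where "Y = (\<Union>t\<in>{0..m}. {the (fiter C i t b) # p | p. p \<in> S \<and> wt D p = (\<lambda>k. fst mu k + (int t - n) * A k i)})"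
  have SX: "(\<Union>t\<in>{0..m}. Pj B C j (the (fiter C i t b)) (wadd mu (wscale (int t) (alpha A i0 i)))) = X"
    unfolding PjE cl1 X_def ..
  have SY: "(\<Union>t\<in>{0..m}. Pj B C j (the (fiter C i t b))
                    (rrefl A i0 i (wadd mu (wscale (int m - int t) (alpha A i0 i))))) = Y"
    unfolding PjE cl2 Y_def ..
  have M: "(\<forall>x\<in>X. fiter (tensor C D) i (nat n) x \<noteq> None)
     \<and> bij_betw (\<lambda>x. the (fiter (tensor C D) i (nat n) x)) X Y"
    unfolding X_def Y_def by (rule main_abs[OF RC RD Aii bB mdef ndef' n0])
  have XT: "X \<subseteq> Tcar B S"
  proof
    fix x assume xX: "x \<in> X"
    have "\<exists>t\<in>{0..m}. \<exists>p. x = the (fiter C i t b) # p \<and> p \<in> S"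
      using xX unfolding X_def by blast
    then obtain t p where t0: "t \<in> {0..m}" and t: "x = the (fiter C i t b) # p" "p \<in> S" by blast
    have tm: "t \<le> m" using t0 by simp
    obtain b' where b': "fiter C i t b = Some b'" using R_fiter_dom[OF RC bB, of t] tm mdef by auto
    have bB': "b' \<in> B" using R_fiter[OF RC bB b'] by blast
    have xe: "x = b' # p" using t(1) b' by simp
    show "x \<in> Tcar B S" unfolding Tcar_def xe using bB' t(2) by blast
  qed
  have eqf0: "fiter T i (nat n) x = fiter (tensor C D) i (nat n) x" if "x \<in> X" for x
    using TE[OF subsetD[OF XT that]] .
  have eqf: "\<And>x. x \<in> X \<Longrightarrow> the (fiter T i (nat n) x) = the (fiter (tensor C D) i (nat n) x)"
    using eqf0 by simp
  have "bij_betw (\<lambda>x. the (fiter T i (nat n) x)) X Y"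
    using conjunct2[OF M] bij_betw_cong[where A=X and A'=Y and f="\<lambda>x. the (fiter T i (nat n) x)" and g="\<lambda>x. the (fiter (tensor C D) i (nat n) x)", OF eqf] by simp
  moreover have "\<forall>x\<in>X. fiter T i (nat n) x \<noteq> None" using conjunct1[OF M] eqf0 by simp
  ultimately show ?thesis unfolding SX SY by blast
qed

theorem mainTheorem4:
  fixes A :: "'i::finite \<Rightarrow> 'i \<Rightarrow> int" and i0 :: 'i
    and B :: "'b set" and C :: "('i, 'b) crys"
    and b :: 'b and i :: 'i and j :: nat and mu :: "'i wP" and m :: nat and n :: int
  assumes "affine_gcm A"
    and "is_crystal A B C"
    and "b \<in> B"
    and "m = phi C i b"
    and "n = pairing i mu + int m"
    and "n \<ge> 0"
  shows "(\<forall>x \<in> (\<Union>t\<in>{0..m}. Pj B C j (the (fiter C i t b))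
                    (wadd mu (wscale (int t) (alpha A i0 i)))).
            fiter (tpow C j) i (nat n) x \<noteq> None)
    \<and> bij_betw (\<lambda>x. the (fiter (tpow C j) i (nat n) x))
        (\<Union>t\<in>{0..m}. Pj B C j (the (fiter C i t b)) (wadd mu (wscale (int t) (alpha A i0 i))))
        (\<Union>t\<in>{0..m}. Pj B C j (the (fiter C i t b))
                    (rrefl A i0 i (wadd mu (wscale (int m - int t) (alpha A i0 i)))))"
proof -
  have Aii: "A i i = 2" using assms(1) unfolding affine_gcm_def gcm_def by blast
  have RC: "reg A i C B" using crystal_reg[OF assms(2) Aii] .
  show ?thesis
  proof (cases j)
    case 0
    have PjE: "Pj B C j y nu = {y # p | p. p \<in> {[]} \<and> wt (Ecrys :: ('i, 'b list) crys) p = cl nu}" for y nu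
      unfolding Pj_def 0 by (auto simp: Ecrys_def)
    have RT: "reg A i (tensor C Ecrys) (Lc B 0)"
      using T_reg[OF RC Ecrys_reg] unfolding Tcar_Lc0 .
    have TE: "fiter (tpow C j) i k x = fiter (tensor C (Ecrys :: ('i, 'b list) crys)) i k x"
      if "x \<in> Tcar B {[]}" for x k
    proof -
      have e1: "\<forall>x\<in>Lc B 0. ff (single C) i x = ff (tensor C Ecrys) i x"
        using single_tensor_eq[OF RC] by blast
      have c1: "\<forall>x\<in>Lc B 0. \<forall>y. ff (tensor C Ecrys) i x = Some y \<longrightarrow> y \<in> Lc B 0"
        using R_ff(1)[OF RT] by blast
      show ?thesis unfolding 0 tpow.simps fiter_itr
        using itr_cong[OF e1 c1] that unfolding Tcar_Lc0 by blast
    qed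
    show ?thesis
      by (rule final_gen[OF RC Ecrys_reg Aii assms(3,4,5,6) PjE TE])
  next
    case (Suc j')
    have PjE: "Pj B C j y nu = {y # p | p. p \<in> Lc B j' \<and> wt (tpow C j') p = cl nu}" for y nu
    proof -
      have "p \<in> Lc B j' \<longleftrightarrow> length p = j \<and> set p \<subseteq> B" for p unfolding Lc_def Suc by simp
      moreover have "p \<in> Lc B j' \<Longrightarrow> wt (tpow C j') p = (\<lambda>k. \<Sum>x\<leftarrow>p. wt C x k)" for p
        by (rule tpow_wt)
      ultimately show ?thesis unfolding Pj_def by auto
    qed
    have RD: "reg A i (tpow C j') (Lc B j')" by (rule tpow_reg[OF RC])
    have TE: "fiter (tpow C j) i k x = fiter (tensor C (tpow C j')) i k x" for x k
      unfolding Suc by simp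
    show ?thesis
      by (rule final_gen[OF RC RD Aii assms(3,4,5,6) PjE TE])
  qed
qed



end
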